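(* Let $m\ge3$, $n\ge1$ and $k=\lfloor n/2\rfloor$. For every probability distribution $p$ on the $m!$ strict rankings of $m$ candidates, $$P(m,n;p)\;\ge\;m\Bigl(1-B\bigl(k;n,\tfrac1m\bigr)\Bigr),$$ and equality holds for the distribution $p^*$ that assigns probability $1/m$ to each of the $m$ cyclic rankings $C_1C_2\cdots C_m$, $C_2C_3\cdots C_mC_1$, $\dots$, $C_mC_1\cdots C_{m-1}$ and probability $0$ to all other rankings. Thus $p^*$ minimizes the probability of a Condorcet winner, and the minimum value is $m(1-B(k;n,1/m))$.
   Context: $n$ voters independently choose a strict ranking (listed best to worst) of the candidates $C_1,\dots,C_m$ according to $p$. A candidate is a Condorcet winner if, for every other candidate, strictly more than $n/2$ voters rank it above that candidate. $P(m,n;p)$ is the probability that a Condorcet winner exists. $B(k;n,q)=\sum_{j=0}^{k}\binom nj q^j(1-q)^{n-j}$ is the binomial cumulative distribution function. *)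

theory Defs
  imports "HOL-Combinatorics.Multiset_Permutations" "HOL-Library.FuncSet" Complex_Main
begin

text \<open>Candidates C_1,...,C_m are encoded as 0,...,m-1. A strict ranking is a list
  listing every candidate exactly once, best first.\<close>

definition rankings :: "nat \<Rightarrow> nat list set" where
  "rankings m = permutations_of_set {0..<m}"

definition ranks_above :: "nat list \<Rightarrow> nat \<Rightarrow> nat \<Rightarrow> bool" where
  "ranks_above r a b \<longleftrightarrow> (\<exists>i j. i < j \<and> j < length r \<and> r ! i = a \<and> r ! j = b)"

definition profiles :: "nat \<Rightarrow> nat \<Rightarrow> (nat \<Rightarrow> nat list) set" where
  "profiles m n = PiE {0..<n} (\<lambda>_. rankings m)"

definition condorcet_winner :: "nat \<Rightarrow> nat \<Rightarrow> (nat \<Rightarrow> nat list) \<Rightarrow> nat \<Rightarrow> bool" where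
  "condorcet_winner m n f c \<longleftrightarrow> c < m \<and>
     (\<forall>d<m. d \<noteq> c \<longrightarrow> 2 * card {i \<in> {0..<n}. ranks_above (f i) c d} > n)"

definition is_ranking_distribution :: "nat \<Rightarrow> (nat list \<Rightarrow> real) \<Rightarrow> bool" where
  "is_ranking_distribution m p \<longleftrightarrow>
     (\<forall>r\<in>rankings m. p r \<ge> 0) \<and> (\<Sum>r\<in>rankings m. p r) = 1"

text \<open>P(m,n;p): probability that n independent voters, each drawing a ranking
  according to p, produce a profile with a Condorcet winner.\<close>
definition condorcet_prob :: "nat \<Rightarrow> nat \<Rightarrow> (nat list \<Rightarrow> real) \<Rightarrow> real" where
  "condorcet_prob m n p =
     (\<Sum>f\<in>{f\<in>profiles m n. \<exists>c. condorcet_winner m n f c}. \<Prod>i\<in>{0..<n}. p (f i))"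

definition binom_cdf :: "nat \<Rightarrow> nat \<Rightarrow> real \<Rightarrow> real" where
  "binom_cdf k n q = (\<Sum>j=0..k. real (n choose j) * q ^ j * (1 - q) ^ (n - j))"

definition cyclic_ranking :: "nat \<Rightarrow> nat \<Rightarrow> nat list" where
  "cyclic_ranking m j = map (\<lambda>i. (j + i) mod m) [0..<m]"

definition p_star :: "nat \<Rightarrow> nat list \<Rightarrow> real" where
  "p_star m r = (if r \<in> cyclic_ranking m ` {0..<m} then 1 / real m else 0)"

end

theory Submission
  imports Defs "HOL-Analysis.Analysis"
begin

definition gfun :: "nat \<Rightarrow> nat \<Rightarrow> real \<Rightarrow> real" where
  "gfun n k q = (\<Sum>i=k..<n. real (n choose Suc i) * q ^ Suc i * (1 - q) ^ (n - Suc i))"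

definition bfun :: "nat \<Rightarrow> nat \<Rightarrow> real \<Rightarrow> real" where
  "bfun n k q = real n * real ((n - 1) choose k) * q ^ k * (1 - q) ^ (n - 1 - k)"

lemma term_deriv:
  assumes "i < n"
  shows "((\<lambda>q. real (n choose Suc i) * q ^ Suc i * (1 - q) ^ (n - Suc i)) has_real_derivative
          (bfun n i q - bfun n (Suc i) q)) (at q)"
proof -
  have e1: "real (n choose Suc i) * real (Suc i) = real n * real ((n - 1) choose i)"
    using binomial_absorption[of i n] by (metis of_nat_mult mult.commute)
  have e2: "real (n choose Suc i) * real (n - 1 - i) = real n * real ((n - 1) choose Suc i)"
    using binomial_absorb_comp[of n "Suc i"] by (metis of_nat_mult mult.commute diff_Suc_eq_diff_pred)
  have ex: "n - Suc i = n - 1 - i" "n - 1 - i - Suc 0 = n - 1 - Suc i" "Suc i - Suc 0 = i" by auto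
  show ?thesis
    apply (rule derivative_eq_intros refl)+
    apply (simp only: bfun_def ex)
    unfolding e1[symmetric] e2[symmetric]
    by (simp add: algebra_simps)
qed

lemma bfun_n: "bfun n n q = 0"
  by (cases n) (simp_all add: bfun_def)

lemma gfun_deriv:
  assumes "k \<le> n"
  shows "(gfun n k has_real_derivative bfun n k q) (at q)"
proof -
  have "(gfun n k has_real_derivative (\<Sum>i=k..<n. bfun n i q - bfun n (Suc i) q)) (at q)"
    unfolding gfun_def[abs_def]
    by (rule DERIV_sum) (rule term_deriv, simp)
  also have "(\<Sum>i=k..<n. bfun n i q - bfun n (Suc i) q) = - (\<Sum>i=k..<n. bfun n (Suc i) q - bfun n i q)"
    by (simp add: sum_negf[symmetric])
  also have "\<dots> = bfun n k q"
    using sum_Suc_diff'[OF assms, of "\<lambda>i. bfun n i q"] by (simp add: bfun_n)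
  finally show ?thesis .
qed

lemma bfun_mono:
  assumes "n - 1 - k \<le> k" "0 \<le> s" "s \<le> x" "s * (1 - s) \<le> x * (1 - x)" "x \<le> 1"
  shows "bfun n k s \<le> bfun n k x"
proof -
  define l where "l = n - 1 - k"
  have kl: "k = (k - l) + l" using assms(1) l_def by simp
  have "s ^ k * (1 - s) ^ l = s ^ (k - l) * (s * (1 - s)) ^ l"
    by (subst kl) (simp add: power_add power_mult_distrib)
  also have "\<dots> \<le> x ^ (k - l) * (x * (1 - x)) ^ l"
  proof (rule mult_mono)
    show "s ^ (k - l) \<le> x ^ (k - l)" using assms by (intro power_mono) auto
    show "(s * (1 - s)) ^ l \<le> (x * (1 - x)) ^ l" using assms by (intro power_mono) auto
    show "0 \<le> x ^ (k - l)" using assms by simp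
    show "0 \<le> (s * (1 - s)) ^ l" using assms by simp
  qed
  also have "\<dots> = x ^ k * (1 - x) ^ l"
    by (subst (2) kl) (simp add: power_add power_mult_distrib)
  finally have ineq: "s ^ k * (1 - s) ^ l \<le> x ^ k * (1 - x) ^ l" .
  have eq: "bfun n k s = (real n * real ((n - 1) choose k)) * (s ^ k * (1 - s) ^ l)"
    "bfun n k x = (real n * real ((n - 1) choose k)) * (x ^ k * (1 - x) ^ l)"
    unfolding bfun_def l_def by (simp_all only: mult.assoc)
  have c: "0 \<le> real n * real ((n - 1) choose k)" by simp
  show ?thesis unfolding eq by (rule mult_left_mono[OF ineq c])
qed

lemma bfun_mono_half:
  assumes "n - 1 - k \<le> k" "0 \<le> x" "x \<le> y" "y \<le> 1/2"
  shows "bfun n k x \<le> bfun n k y"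
proof -
  have "x * (1 - x) \<le> y * (1 - y)"
    using mult_nonneg_nonneg[of "y - x" "1 - x - y"] assms by (auto simp: algebra_simps)
  moreover have "y \<le> 1" using assms by auto
  ultimately show ?thesis
    using bfun_mono[OF assms(1,2,3)] by blast
qed

lemma gfun_convex:
  assumes "k \<le> n" "n - 1 - k \<le> k"
  shows "convex_on {0..1/2} (gfun n k)"
  by (intro convex_on_realI[where f' = "bfun n k"] gfun_deriv assms(1))
     (auto intro: bfun_mono_half[OF assms(2)])

lemma F_mono:
  assumes "k \<le> n" "n - 1 - k \<le> k" "m \<ge> 2" "1 / real m \<le> x" "x \<le> 1"
  shows "real m * gfun n k (1 / real m) \<le> gfun n k x + (real m - 1) * gfun n k ((1 - x) / (real m - 1))"
proof -
  define F where "F t = gfun n k t + (real m - 1) * gfun n k ((1 - t) / (real m - 1))" for t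
  have m1: "real m - 1 > 0" using assms(3) by simp
  have deriv: "(F has_real_derivative bfun n k t - bfun n k ((1 - t) / (real m - 1))) (at t)" for t
  proof -
    have d: "((\<lambda>t. gfun n k ((1 - t) / (real m - 1))) has_real_derivative
            bfun n k ((1 - t) / (real m - 1)) * (- 1 / (real m - 1))) (at t)"
    proof (rule DERIV_chain2[OF gfun_deriv[OF assms(1)]])
      have "((\<lambda>t. (1 - t) * (1 / (real m - 1))) has_real_derivative (0 - 1) * (1 / (real m - 1))) (at t)"
        by (intro DERIV_cmult_right DERIV_diff DERIV_const DERIV_ident)
      then show "((\<lambda>t. (1 - t) / (real m - 1)) has_real_derivative - 1 / (real m - 1)) (at t)"
        by simp
    qed
    have "(F has_real_derivative bfun n k t + (real m - 1) * (bfun n k ((1 - t) / (real m - 1)) * (- 1 / (real m - 1)))) (at t)"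
      unfolding F_def[abs_def] by (intro DERIV_add gfun_deriv[OF assms(1)] DERIV_cmult d)
    then show ?thesis using m1 by simp
  qed
  have nonneg: "0 \<le> bfun n k t - bfun n k ((1 - t) / (real m - 1))" if t: "t \<in> {1 / real m..x}" for t
  proof -
    define s where "s = (1 - t) / (real m - 1)"
    have mt: "real m * t \<ge> 1" using t assms(3) by (auto simp: field_simps)
    have s0: "0 \<le> s" using t assms m1 unfolding s_def by auto
    have st: "s \<le> t" using mt m1 unfolding s_def by (simp add: field_simps)
    have "0 \<le> (real m - 2) * (1 - t)" using t assms by (intro mult_nonneg_nonneg) auto
    then have s1: "s \<le> 1 - t" using t assms m1 unfolding s_def by (auto simp: field_simps algebra_simps)
    have "s * (1 - s) \<le> t * (1 - t)"
      using mult_nonneg_nonneg[of "t - s" "1 - t - s"] st s1 by (auto simp: algebra_simps)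
    moreover have "t \<le> 1" using t assms by auto
    ultimately show ?thesis
      using bfun_mono[OF assms(2) s0 st] unfolding s_def by auto
  qed
  have "F (1 / real m) \<le> F x"
    by (rule deriv_nonneg_imp_mono[where g = F and g' = "\<lambda>t. bfun n k t - bfun n k ((1 - t) / (real m - 1))", OF deriv nonneg]) (use assms in auto)
  moreover have "(1 - 1 / real m) / (real m - 1) = 1 / real m"
    using m1 by (simp add: field_simps)
  then have "F (1 / real m) = real m * gfun n k (1 / real m)"
    by (simp add: F_def algebra_simps)
  ultimately show ?thesis unfolding F_def by simp
qed

lemma sum_g_ge:
  fixes q :: "nat \<Rightarrow> real"
  assumes "k \<le> n" "n - 1 - k \<le> k" "m \<ge> 2" "\<And>c. c < m \<Longrightarrow> q c \<ge> 0" "(\<Sum>c<m. q c) = 1"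
  shows "real m * gfun n k (1 / real m) \<le> (\<Sum>c<m. gfun n k (q c))"
proof -
  define M where "M = Max (q ` {..<m})"
  have "M \<in> q ` {..<m}" unfolding M_def using assms(3) by (intro Max_in) (auto simp: lessThan_empty_iff)
  then obtain c0 where c0: "c0 < m" "q c0 = M" by auto
  have qmax: "q c \<le> q c0" if "c < m" for c
    using that c0 Max_ge[of "q ` {..<m}" "q c"] unfolding M_def by auto
  define x where "x = q c0"
  have "1 \<le> real m * x"
  proof -
    have "(\<Sum>c<m. q c) \<le> (\<Sum>c<m. x)" using qmax unfolding x_def by (intro sum_mono) auto
    then show ?thesis using assms(5) by simp
  qed
  then have x1: "1 / real m \<le> x" using assms(3) by (simp add: field_simps)
  have xle: "x \<le> 1"
    using member_le_sum[of c0 "{..<m}" q] assms(4,5) c0 unfolding x_def by auto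
  define Oth where "Oth = {..<m} - {c0}"
  have finO: "finite Oth" unfolding Oth_def by auto
  have cardO: "card Oth = m - 1" unfolding Oth_def using c0 by auto
  have sumO: "(\<Sum>c\<in>Oth. q c) = 1 - x"
    using sum.remove[of "{..<m}" c0 q] c0 assms(5) unfolding Oth_def x_def by auto
  have half: "q c \<in> {0..1/2}" if "c \<in> Oth" for c
  proof -
    have cm: "c < m" "c \<noteq> c0" using that unfolding Oth_def by auto
    have "(\<Sum>i\<in>{c, c0}. q i) \<le> (\<Sum>i<m. q i)"
      using cm c0 assms(4) by (intro sum_mono2) auto
    then have "q c + x \<le> 1" using cm assms(5) unfolding x_def by simp
    moreover have "q c \<le> x" using qmax cm unfolding x_def by auto
    ultimately show ?thesis using assms(4) cm by auto
  qed
  have m1: "real m - 1 > 0" using assms(3) by simp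
  have rm1: "real (m - 1) = real m - 1" using assms(3) by simp
  have J: "gfun n k (\<Sum>c\<in>Oth. (1 / (real m - 1)) *\<^sub>R q c) \<le> (\<Sum>c\<in>Oth. (1 / (real m - 1)) * gfun n k (q c))"
  proof (rule convex_on_sum[OF finO _ gfun_convex[OF assms(1,2)]])
    show "Oth \<noteq> {}" using cardO assms(3) by auto
    show "(\<Sum>c\<in>Oth. 1 / (real m - 1)) = 1" using cardO m1 rm1 by simp
  qed (use m1 half in auto)
  have e1: "(\<Sum>c\<in>Oth. (1 / (real m - 1)) *\<^sub>R q c) = (1 - x) / (real m - 1)"
    using sumO by (simp add: sum_divide_distrib[symmetric])
  have e2: "(\<Sum>c\<in>Oth. (1 / (real m - 1)) * gfun n k (q c)) = (\<Sum>c\<in>Oth. gfun n k (q c)) / (real m - 1)"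
    by (simp add: sum_divide_distrib[symmetric])
  have "gfun n k ((1 - x) / (real m - 1)) * (real m - 1) \<le> (\<Sum>c\<in>Oth. gfun n k (q c))"
    using J[unfolded e1 e2] by (subst (asm) pos_le_divide_eq[OF m1])
  then have "(real m - 1) * gfun n k ((1 - x) / (real m - 1)) \<le> (\<Sum>c\<in>Oth. gfun n k (q c))"
    by (simp only: mult.commute)
  moreover have "(\<Sum>c<m. gfun n k (q c)) = gfun n k x + (\<Sum>c\<in>Oth. gfun n k (q c))"
    using sum.remove[of "{..<m}" c0 "\<lambda>c. gfun n k (q c)"] c0 unfolding Oth_def x_def by auto
  ultimately show ?thesis
    using F_mono[OF assms(1,2,3) x1 xle] by linarith
qed

definition Scnt :: "('a \<Rightarrow> real) \<Rightarrow> 'a set \<Rightarrow> 'a set \<Rightarrow> nat \<Rightarrow> nat \<Rightarrow> real" where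
  "Scnt p R A n j = (\<Sum>f\<in>PiE {0..<n} (\<lambda>_. R).
      if card {i\<in>{0..<n}. f i \<in> A} = j then \<Prod>i\<in>{0..<n}. p (f i) else 0)"

lemma Scnt_0: "Scnt p R A 0 j = (if j = 0 then 1 else 0)"
  by (simp add: Scnt_def)

lemma Scnt_Suc:
  assumes "finite R"
  shows "Scnt p R A (Suc n) j =
    (\<Sum>y\<in>R. p y * (if y \<in> A then (if j = 0 then 0 else Scnt p R A n (j - 1)) else Scnt p R A n j))"
proof -
  define h where "h f = (if card {i\<in>{0..<Suc n}. f i \<in> A} = j then \<Prod>i\<in>{0..<Suc n}. p (f i) else 0)"
    for f :: "nat \<Rightarrow> 'a"
  have ins: "{0..<Suc n} = insert n {0..<n}" by auto
  have "Scnt p R A (Suc n) j = (\<Sum>f\<in>PiE (insert n {0..<n}) (\<lambda>_. R). h f)"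
    unfolding Scnt_def h_def ins ..
  also have "\<dots> = (\<Sum>(y, g)\<in>R \<times> PiE {0..<n} (\<lambda>_. R). h (g(n := y)))"
    unfolding PiE_insert_eq
    by (subst sum.reindex[OF inj_combinator]) (auto simp: case_prod_unfold)
  also have "\<dots> = (\<Sum>y\<in>R. \<Sum>g\<in>PiE {0..<n} (\<lambda>_. R). h (g(n := y)))"
    by (rule sum.cartesian_product[symmetric])
  also have "\<dots> = (\<Sum>y\<in>R. p y * (if y \<in> A then (if j = 0 then 0 else Scnt p R A n (j - 1)) else Scnt p R A n j))"
  proof (rule sum.cong[OF refl])
    fix y assume y: "y \<in> R"
    have cnt: "card {i\<in>{0..<Suc n}. (g(n := y)) i \<in> A} =
               card {i\<in>{0..<n}. g i \<in> A} + (if y \<in> A then 1 else 0)" for g :: "nat \<Rightarrow> 'a"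
    proof -
      have "{i\<in>{0..<Suc n}. (g(n := y)) i \<in> A} =
            (if y \<in> A then insert n {i\<in>{0..<n}. g i \<in> A} else {i\<in>{0..<n}. g i \<in> A})"
        by auto
      then show ?thesis by simp
    qed
    have prd: "(\<Prod>i\<in>{0..<Suc n}. p ((g(n := y)) i)) = p y * (\<Prod>i\<in>{0..<n}. p (g i))" for g :: "nat \<Rightarrow> 'a"
    proof -
      have "(\<Prod>i\<in>{0..<n}. p ((g(n := y)) i)) = (\<Prod>i\<in>{0..<n}. p (g i))"
        by (rule prod.cong) auto
      then show ?thesis by (simp add: mult.commute)
    qed
    show "(\<Sum>g\<in>PiE {0..<n} (\<lambda>_. R). h (g(n := y))) =
          p y * (if y \<in> A then (if j = 0 then 0 else Scnt p R A n (j - 1)) else Scnt p R A n j)"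
    proof (cases "y \<in> A")
      case True
      show ?thesis
      proof (cases "j = 0")
        case True
        with \<open>y \<in> A\<close> show ?thesis unfolding h_def cnt prd by simp
      next
        case False
        have "(\<Sum>g\<in>PiE {0..<n} (\<lambda>_. R). h (g(n := y))) =
              (\<Sum>g\<in>PiE {0..<n} (\<lambda>_. R). p y * (if card {i\<in>{0..<n}. g i \<in> A} = j - 1 then \<Prod>i\<in>{0..<n}. p (g i) else 0))"
          unfolding h_def cnt prd using \<open>y \<in> A\<close> False by (intro sum.cong refl) auto
        also have "\<dots> = p y * Scnt p R A n (j - 1)"
          unfolding Scnt_def by (simp add: sum_distrib_left)
        finally show ?thesis using \<open>y \<in> A\<close> False by simp
      qed
    next
      case False
      have "(\<Sum>g\<in>PiE {0..<n} (\<lambda>_. R). h (g(n := y))) =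
            (\<Sum>g\<in>PiE {0..<n} (\<lambda>_. R). p y * (if card {i\<in>{0..<n}. g i \<in> A} = j then \<Prod>i\<in>{0..<n}. p (g i) else 0))"
        unfolding h_def cnt prd using False by (intro sum.cong refl) auto
      also have "\<dots> = p y * Scnt p R A n j"
        unfolding Scnt_def by (simp add: sum_distrib_left)
      finally show ?thesis using False by simp
    qed
  qed
  finally show ?thesis .
qed

lemma Scnt_formula:
  assumes "finite R"
  shows "Scnt p R A n j = real (n choose j) * (\<Sum>r\<in>R\<inter>A. p r) ^ j * (\<Sum>r\<in>R-A. p r) ^ (n - j)"
proof (induction n arbitrary: j)
  case 0
  then show ?case by (simp add: Scnt_0)
next
  case (Suc n)
  note IH = Suc.IH
  define a where "a = (\<Sum>r\<in>R\<inter>A. p r)"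
  define b where "b = (\<Sum>r\<in>R-A. p r)"
  have split: "(\<Sum>y\<in>R. f y) = (\<Sum>y\<in>R\<inter>A. f y) + (\<Sum>y\<in>R-A. f y)" for f :: "'a \<Rightarrow> real"
    using sum.Int_Diff[OF assms, of f A] .
  have "Scnt p R A (Suc n) j = (\<Sum>y\<in>R\<inter>A. p y * (if j = 0 then 0 else Scnt p R A n (j - 1))) +
        (\<Sum>y\<in>R-A. p y * Scnt p R A n j)"
    unfolding Scnt_Suc[OF assms] split by (intro arg_cong2[where f = "(+)"] sum.cong) auto
  also have "\<dots> = a * (if j = 0 then 0 else Scnt p R A n (j - 1)) + b * Scnt p R A n j"
    unfolding a_def b_def by (simp add: sum_distrib_right)
  finally have rec: "Scnt p R A (Suc n) j = a * (if j = 0 then 0 else Scnt p R A n (j - 1)) + b * Scnt p R A n j" .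
  show ?case
  proof (cases j)
    case 0
    then show ?thesis unfolding rec IH a_def[symmetric] b_def[symmetric] by simp
  next
    case (Suc j')
    note jj = Suc
    have "Scnt p R A (Suc n) j = a * (real (n choose j') * a ^ j' * b ^ (n - j')) +
           b * (real (n choose Suc j') * a ^ Suc j' * b ^ (n - Suc j'))"
      unfolding rec IH a_def[symmetric] b_def[symmetric] using jj by simp
    also have "\<dots> = real (Suc n choose Suc j') * a ^ Suc j' * b ^ (Suc n - Suc j')"
    proof (cases "j' < n")
      case True
      then have "b * b ^ (n - Suc j') = b ^ (n - j')"
        by (metis Suc_diff_Suc power_Suc)
      then show ?thesis by (simp add: algebra_simps)
    next
      case False
      then have "n choose Suc j' = 0" by simp
      then show ?thesis by (simp add: algebra_simps)
    qed
    finally show ?thesis unfolding jj a_def b_def .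
  qed
qed

definition HA :: "nat \<Rightarrow> nat list set" where "HA c = {r. hd r = c}"

definition maj :: "nat \<Rightarrow> (nat \<Rightarrow> nat list) \<Rightarrow> nat \<Rightarrow> bool" where
  "maj n f c \<longleftrightarrow> 2 * card {i\<in>{0..<n}. f i \<in> HA c} > n"

definition wt :: "nat \<Rightarrow> (nat list \<Rightarrow> real) \<Rightarrow> (nat \<Rightarrow> nat list) \<Rightarrow> real" where
  "wt n p f = (\<Prod>i\<in>{0..<n}. p (f i))"

definition qf :: "nat \<Rightarrow> (nat list \<Rightarrow> real) \<Rightarrow> nat \<Rightarrow> real" where
  "qf m p c = (\<Sum>r\<in>rankings m \<inter> HA c. p r)"

lemma finite_rankings [simp]: "finite (rankings m)"
  by (simp add: rankings_def)

lemma rank_props: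
  assumes "r \<in> rankings m"
  shows "set r = {0..<m}" "distinct r" "length r = m"
proof -
  show s: "set r = {0..<m}" and d: "distinct r"
    using assms unfolding rankings_def permutations_of_set_def by auto
  show "length r = m" using distinct_card[OF d] s by simp
qed

lemma hd_rank:
  assumes "r \<in> rankings m" "m > 0"
  shows "hd r < m" "r \<noteq> []"
proof -
  show ne: "r \<noteq> []" using rank_props(3)[OF assms(1)] assms(2) by auto
  show "hd r < m" using hd_in_set[OF ne] rank_props(1)[OF assms(1)] by auto
qed

lemma rank_top_above:
  assumes "r \<in> rankings m" "m > 0" "d < m" "d \<noteq> hd r"
  shows "ranks_above r (hd r) d"
proof -
  have "d \<in> set r" using rank_props(1)[OF assms(1)] assms(3) by auto
  then obtain j where j: "j < length r" "r ! j = d" by (auto simp: in_set_conv_nth)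
  have ne: "r \<noteq> []" using hd_rank[OF assms(1,2)] by simp
  have "hd r = r ! 0" using ne by (simp add: hd_conv_nth)
  have "j \<noteq> 0"
  proof
    assume "j = 0"
    then have "d = hd r" using j \<open>hd r = r ! 0\<close> by simp
    then show False using assms(4) by simp
  qed
  then have "0 < j" by simp
  then show ?thesis unfolding ranks_above_def using j \<open>hd r = r ! 0\<close>
    by (intro exI[of _ 0] exI[of _ j]) auto
qed

lemma maj_cw:
  assumes "m > 0" "f \<in> profiles m n" "maj n f c"
  shows "condorcet_winner m n f c"
proof -
  have fR: "f i \<in> rankings m" if "i < n" for i
    using assms(2) that unfolding profiles_def by auto
  have "{i\<in>{0..<n}. f i \<in> HA c} \<noteq> {}"
  proof
    assume E: "{i\<in>{0..<n}. f i \<in> HA c} = {}"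
    have "card {i\<in>{0..<n}. f i \<in> HA c} = 0" by (simp only: E card.empty)
    then show False using assms(3) unfolding maj_def by linarith
  qed
  then obtain i where i: "i < n" "hd (f i) = c" by (auto simp: HA_def)
  have cm: "c < m" using hd_rank(1)[OF fR[OF i(1)] assms(1)] i by simp
  show ?thesis unfolding condorcet_winner_def
  proof (intro conjI allI impI cm)
    fix d assume d: "d < m" "d \<noteq> c"
    have "{i\<in>{0..<n}. f i \<in> HA c} \<subseteq> {i\<in>{0..<n}. ranks_above (f i) c d}"
    proof
      fix i assume "i \<in> {i\<in>{0..<n}. f i \<in> HA c}"
      then have i: "i < n" "hd (f i) = c" by (auto simp: HA_def)
      show "i \<in> {i\<in>{0..<n}. ranks_above (f i) c d}"
        using rank_top_above[OF fR[OF i(1)] assms(1) d(1)] i d by auto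
    qed
    then have "card {i\<in>{0..<n}. f i \<in> HA c} \<le> card {i\<in>{0..<n}. ranks_above (f i) c d}"
      by (intro card_mono) auto
    then show "n < 2 * card {i\<in>{0..<n}. ranks_above (f i) c d}"
      using assms(3) unfolding maj_def by linarith
  qed
qed

lemma maj_unique:
  assumes "maj n f c" "maj n f c'"
  shows "c = c'"
proof (rule ccontr)
  assume ne: "c \<noteq> c'"
  let ?A = "{i\<in>{0..<n}. f i \<in> HA c}" and ?B = "{i\<in>{0..<n}. f i \<in> HA c'}"
  have "?A \<inter> ?B = {}" using ne by (auto simp: HA_def)
  then have "card (?A \<union> ?B) = card ?A + card ?B" by (intro card_Un_disjoint) auto
  moreover have "card (?A \<union> ?B) \<le> card {0..<n}"
    by (intro card_mono) auto
  then have "card (?A \<union> ?B) \<le> n" by simp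
  ultimately show False using assms unfolding maj_def by linarith
qed

lemma gfun_alt:
  "gfun n k q = (\<Sum>j\<in>{Suc k..n}. real (n choose j) * q ^ j * (1 - q) ^ (n - j))"
proof -
  have e: "{Suc k..n} = {Suc k..<Suc n}" by auto
  show ?thesis unfolding gfun_def e sum.shift_bounds_Suc_ivl ..
qed

lemma maj_term:
  assumes sum1: "(\<Sum>r\<in>rankings m. p r) = 1"
  shows "(\<Sum>f\<in>{f\<in>profiles m n. maj n f c}. wt n p f) = gfun n (n div 2) (qf m p c)"
proof -
  let ?R = "rankings m" and ?P = "profiles m n" and ?k = "n div 2"
  let ?cnt = "\<lambda>f. card {i\<in>{0..<n}. f i \<in> HA c}"
  have rest: "(\<Sum>r\<in>?R - HA c. p r) = 1 - qf m p c"
    using sum.Int_Diff[OF finite_rankings, of p m "HA c"] sum1 unfolding qf_def by simp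
  have finP: "finite ?P" unfolding profiles_def by (intro finite_PiE) auto
  have "gfun n ?k (qf m p c) = (\<Sum>j\<in>{Suc ?k..n}. Scnt p ?R (HA c) n j)"
    unfolding gfun_alt Scnt_formula[OF finite_rankings] qf_def[symmetric] rest ..
  also have "\<dots> = (\<Sum>j\<in>{Suc ?k..n}. \<Sum>f\<in>?P. if ?cnt f = j then wt n p f else 0)"
    unfolding Scnt_def profiles_def wt_def ..
  also have "\<dots> = (\<Sum>f\<in>?P. \<Sum>j\<in>{Suc ?k..n}. if ?cnt f = j then wt n p f else 0)"
    by (rule sum.swap)
  also have "\<dots> = (\<Sum>f\<in>?P. if maj n f c then wt n p f else 0)"
  proof (rule sum.cong[OF refl])
    fix f assume "f \<in> ?P"
    have "?cnt f \<le> card {0..<n}" by (intro card_mono) auto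
    then have le: "?cnt f \<le> n" by simp
    have "(\<Sum>j\<in>{Suc ?k..n}. if ?cnt f = j then wt n p f else 0) = (if ?cnt f \<in> {Suc ?k..n} then wt n p f else 0)"
      by (rule sum.delta') simp
    also have "(?cnt f \<in> {Suc ?k..n}) = maj n f c" unfolding maj_def using le by auto
    finally show "(\<Sum>j\<in>{Suc ?k..n}. if ?cnt f = j then wt n p f else 0) = (if maj n f c then wt n p f else 0)" .
  qed
  also have "\<dots> = (\<Sum>f\<in>{f\<in>?P. maj n f c}. wt n p f)"
    by (rule sum.inter_filter[OF finP, symmetric])
  finally show ?thesis ..
qed

lemma maj_sum:
  assumes "(\<Sum>r\<in>rankings m. p r) = 1"
  shows "(\<Sum>f\<in>{f\<in>profiles m n. \<exists>c<m. maj n f c}. wt n p f) = (\<Sum>c<m. gfun n (n div 2) (qf m p c))"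
proof -
  have finP: "finite (profiles m n)" unfolding profiles_def by (intro finite_PiE) auto
  have "{f\<in>profiles m n. \<exists>c<m. maj n f c} = (\<Union>c\<in>{..<m}. {f\<in>profiles m n. maj n f c})" by auto
  then have "(\<Sum>f\<in>{f\<in>profiles m n. \<exists>c<m. maj n f c}. wt n p f) =
      (\<Sum>c<m. \<Sum>f\<in>{f\<in>profiles m n. maj n f c}. wt n p f)"
    using finP by (simp only:) (rule sum.UNION_disjoint, auto dest: maj_unique)
  also have "\<dots> = (\<Sum>c<m. gfun n (n div 2) (qf m p c))"
    by (intro sum.cong refl maj_term[OF assms])
  finally show ?thesis .
qed

lemma qf_sum:
  assumes "m > 0"
  shows "(\<Sum>c<m. qf m p c) = (\<Sum>r\<in>rankings m. p r)"
proof -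
  have U: "(\<Union>c\<in>{..<m}. rankings m \<inter> HA c) = rankings m"
    using hd_rank[OF _ assms] by (auto simp: HA_def)
  have "(\<Sum>r\<in>(\<Union>c\<in>{..<m}. rankings m \<inter> HA c). p r) = (\<Sum>c<m. \<Sum>r\<in>rankings m \<inter> HA c. p r)"
    by (rule sum.UNION_disjoint) (auto simp: HA_def)
  then show ?thesis unfolding qf_def U by simp
qed

lemma binom_gfun:
  assumes "k < n"
  shows "1 - binom_cdf k n t = gfun n k t"
proof -
  have "1 = (t + (1 - t)) ^ n" by simp
  also have "\<dots> = (\<Sum>j\<le>n. real (n choose j) * t ^ j * (1 - t) ^ (n - j))"
    by (rule binomial_ring)
  also have "{..n} = {0..k} \<union> {Suc k..n}" using assms by auto
  also have "(\<Sum>j\<in>{0..k} \<union> {Suc k..n}. real (n choose j) * t ^ j * (1 - t) ^ (n - j)) =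
      binom_cdf k n t + gfun n k t"
    unfolding binom_cdf_def gfun_alt by (rule sum.union_disjoint) auto
  finally show ?thesis by simp
qed

lemma cyc_len [simp]: "length (cyclic_ranking m j) = m"
  by (simp add: cyclic_ranking_def)

lemma cyc_nth: "i < m \<Longrightarrow> cyclic_ranking m j ! i = (j + i) mod m"
  by (simp add: cyclic_ranking_def)

lemma mod_inj_aux:
  fixes a b m :: nat
  assumes "a < m" "b < m" "(j + a) mod m = (j + b) mod m" "a \<le> b"
  shows "a = b"
proof (rule ccontr)
  assume "a \<noteq> b"
  then have pos: "0 < b - a" using assms by simp
  have "m dvd (j + b) - (j + a)"
    using assms(3,4) mod_eq_dvd_iff_nat[of "j + a" "j + b" m] by simp
  then have "m dvd b - a" by simp
  then have "m \<le> b - a" using pos by (rule dvd_imp_le)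
  then show False using assms by simp
qed

lemma cyc_rank:
  assumes "m > 0"
  shows "cyclic_ranking m j \<in> rankings m"
proof -
  have inj: "inj_on (\<lambda>i. (j + i) mod m) {0..<m}"
  proof (rule inj_onI)
    fix a b assume "a \<in> {0..<m}" "b \<in> {0..<m}" "(j + a) mod m = (j + b) mod m"
    then show "a = b" using mod_inj_aux[of a m b j] mod_inj_aux[of b m a j] by (cases "a \<le> b") auto
  qed
  have d: "distinct (cyclic_ranking m j)"
    unfolding cyclic_ranking_def using inj by (simp add: distinct_map)
  have sub: "set (cyclic_ranking m j) \<subseteq> {0..<m}"
    unfolding cyclic_ranking_def using assms by auto
  have "card (set (cyclic_ranking m j)) = m" using distinct_card[OF d] by simp
  then have "set (cyclic_ranking m j) = {0..<m}"
    using sub by (intro card_subset_eq) auto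
  then show ?thesis using d unfolding rankings_def permutations_of_set_def by simp
qed

lemma hd_cyc:
  assumes "j < m"
  shows "hd (cyclic_ranking m j) = j"
proof -
  have "cyclic_ranking m j \<noteq> []" using assms by (simp add: cyclic_ranking_def)
  then have "hd (cyclic_ranking m j) = cyclic_ranking m j ! 0" by (simp add: hd_conv_nth)
  also have "\<dots> = j" using assms by (simp add: cyc_nth)
  finally show ?thesis .
qed

lemma cyc_inj: "inj_on (cyclic_ranking m) {0..<m}"
  by (rule inj_onI) (metis atLeastLessThan_iff hd_cyc)

lemma cyc_key:
  assumes "m \<ge> 2" "s < m" "c < m" "ranks_above (cyclic_ranking m s) c ((c + m - 1) mod m)"
  shows "s = c"
proof -
  obtain i j where ij: "i < j" "j < m" "(s + i) mod m = c" "(s + j) mod m = (c + m - 1) mod m"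
    using assms(4) unfolding ranks_above_def by (auto simp: cyc_nth)
  have "Suc (s + j) mod m = Suc ((s + j) mod m) mod m" by (simp add: mod_Suc_eq)
  also have "\<dots> = Suc ((c + m - 1) mod m) mod m" using ij(4) by simp
  also have "\<dots> = Suc (c + m - 1) mod m" by (simp add: mod_Suc_eq)
  also have "Suc (c + m - 1) = c + m" using assms(1) by simp
  also have "(c + m) mod m = c" using assms(3) by simp
  finally have e: "Suc (s + j) mod m = (s + i) mod m" using ij(3) by simp
  have "m dvd Suc (s + j) - (s + i)"
    using e ij(1) mod_eq_dvd_iff_nat[of "s + i" "Suc (s + j)" m] by simp
  then have "m dvd Suc j - i" by (simp add: Suc_diff_le)
  moreover have "0 < Suc j - i" using ij by simp
  ultimately have "m \<le> Suc j - i" by (rule dvd_imp_le)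
  then have "i = 0" using ij by simp
  then show ?thesis using ij(3) assms(2) by simp
qed

lemma cyc_d:
  fixes m c :: nat
  assumes "m \<ge> 2" "c < m"
  shows "(c + m - 1) mod m < m" "(c + m - 1) mod m \<noteq> c"
proof -
  show "(c + m - 1) mod m < m" using assms by simp
  show "(c + m - 1) mod m \<noteq> c"
  proof (cases c)
    case 0
    then show ?thesis using assms by simp
  next
    case (Suc c')
    then have "c + m - 1 = c' + m" by simp
    then have "(c + m - 1) mod m = c'" using assms Suc by simp
    then show ?thesis using Suc by simp
  qed
qed

lemma cw_cyc_maj:
  assumes "m \<ge> 2" "\<And>i. i < n \<Longrightarrow> f i \<in> cyclic_ranking m ` {0..<m}" "condorcet_winner m n f c"
  shows "maj n f c"
proof -
  define d where "d = (c + m - 1) mod m"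
  have cm: "c < m" using assms(3) unfolding condorcet_winner_def by simp
  have "n < 2 * card {i\<in>{0..<n}. ranks_above (f i) c d}"
    using assms(3) cyc_d[OF assms(1) cm] unfolding condorcet_winner_def d_def by auto
  moreover have "{i\<in>{0..<n}. ranks_above (f i) c d} \<subseteq> {i\<in>{0..<n}. f i \<in> HA c}"
  proof
    fix i assume "i \<in> {i\<in>{0..<n}. ranks_above (f i) c d}"
    then have i: "i < n" "ranks_above (f i) c d" by auto
    obtain s where s: "s < m" "f i = cyclic_ranking m s" using assms(2)[OF i(1)] by auto
    have "s = c" using cyc_key[OF assms(1) s(1) cm] i(2) s(2) unfolding d_def by simp
    then show "i \<in> {i\<in>{0..<n}. f i \<in> HA c}" using i s hd_cyc[OF s(1)] by (simp add: HA_def)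
  qed
  then have "card {i\<in>{0..<n}. ranks_above (f i) c d} \<le> card {i\<in>{0..<n}. f i \<in> HA c}"
    by (intro card_mono) auto
  ultimately show ?thesis unfolding maj_def by linarith
qed

lemma pstar_dist:
  assumes "m > 0"
  shows "is_ranking_distribution m (p_star m)"
proof -
  let ?C = "cyclic_ranking m ` {0..<m}"
  have CR: "?C \<subseteq> rankings m" using cyc_rank[OF assms] by auto
  have "(\<Sum>r\<in>rankings m. p_star m r) = (\<Sum>r\<in>rankings m. if r \<in> ?C then 1 / real m else 0)"
    unfolding p_star_def ..
  also have "\<dots> = (\<Sum>r\<in>rankings m \<inter> ?C. 1 / real m)"
    by (rule sum.inter_restrict[symmetric]) simp
  also have "rankings m \<inter> ?C = ?C" using CR by auto
  also have "(\<Sum>r\<in>?C. 1 / real m) = 1"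
    using card_image[OF cyc_inj, of m] assms by simp
  finally show ?thesis unfolding is_ranking_distribution_def p_star_def by simp
qed

lemma qf_pstar:
  assumes "c < m"
  shows "qf m (p_star m) c = 1 / real m"
proof -
  let ?C = "cyclic_ranking m ` {0..<m}"
  have m0: "m > 0" using assms by simp
  have "qf m (p_star m) c = (\<Sum>r\<in>rankings m \<inter> HA c. if r \<in> ?C then 1 / real m else 0)"
    unfolding qf_def p_star_def ..
  also have "\<dots> = (\<Sum>r\<in>rankings m \<inter> HA c \<inter> ?C. 1 / real m)"
    by (rule sum.inter_restrict[symmetric]) simp
  also have "rankings m \<inter> HA c \<inter> ?C = {cyclic_ranking m c}"
    using cyc_rank[OF m0] hd_cyc assms by (auto simp: HA_def)
  finally show ?thesis by simp
qed

lemma wt_nonneg: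
  assumes "\<forall>r\<in>rankings m. p r \<ge> 0" "f \<in> profiles m n"
  shows "wt n p f \<ge> 0"
  unfolding wt_def using assms by (intro prod_nonneg) (auto simp: profiles_def)

lemma cp_wt: "condorcet_prob m n p = (\<Sum>f\<in>{f\<in>profiles m n. \<exists>c. condorcet_winner m n f c}. wt n p f)"
  unfolding condorcet_prob_def wt_def ..

theorem mainTheorem10:
  fixes m n :: nat
  assumes "m \<ge> 3" and "n \<ge> 1"
  shows "(\<forall>p. is_ranking_distribution m p \<longrightarrow>
            condorcet_prob m n p \<ge> real m * (1 - binom_cdf (n div 2) n (1 / real m)))
         \<and> is_ranking_distribution m (p_star m)
         \<and> condorcet_prob m n (p_star m) = real m * (1 - binom_cdf (n div 2) n (1 / real m))"
proof -
  let ?k = "n div 2"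
  have m0: "m > 0" and m2: "m \<ge> 2" using assms by auto
  have kn: "?k < n" "?k \<le> n" "n - 1 - ?k \<le> ?k" using assms by auto
  have finP: "finite (profiles m n)" unfolding profiles_def by (intro finite_PiE) auto
  have rhs: "real m * (1 - binom_cdf ?k n (1 / real m)) = real m * gfun n ?k (1 / real m)"
    using binom_gfun[OF kn(1)] by simp
  have part1: "condorcet_prob m n p \<ge> real m * (1 - binom_cdf ?k n (1 / real m))"
    if p: "is_ranking_distribution m p" for p
  proof -
    have p0: "\<forall>r\<in>rankings m. p r \<ge> 0" and p1: "(\<Sum>r\<in>rankings m. p r) = 1"
      using p unfolding is_ranking_distribution_def by auto
    have "real m * gfun n ?k (1 / real m) \<le> (\<Sum>c<m. gfun n ?k (qf m p c))"
    proof (rule sum_g_ge[OF kn(2,3) m2])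
      show "qf m p c \<ge> 0" if "c < m" for c
        unfolding qf_def using p0 by (intro sum_nonneg) auto
      show "(\<Sum>c<m. qf m p c) = 1" using qf_sum[OF m0] p1 by simp
    qed
    also have "\<dots> = (\<Sum>f\<in>{f\<in>profiles m n. \<exists>c<m. maj n f c}. wt n p f)"
      using maj_sum[OF p1] by simp
    also have "\<dots> \<le> (\<Sum>f\<in>{f\<in>profiles m n. \<exists>c. condorcet_winner m n f c}. wt n p f)"
    proof (rule sum_mono2)
      show "finite {f\<in>profiles m n. \<exists>c. condorcet_winner m n f c}" using finP by simp
      show "{f\<in>profiles m n. \<exists>c<m. maj n f c} \<subseteq> {f\<in>profiles m n. \<exists>c. condorcet_winner m n f c}"
        using maj_cw[OF m0] by blast
      show "0 \<le> wt n p f" if "f \<in> {f\<in>profiles m n. \<exists>c. condorcet_winner m n f c} - {f\<in>profiles m n. \<exists>c<m. maj n f c}" for f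
        using wt_nonneg[OF p0] that by auto
    qed
    finally show ?thesis unfolding rhs cp_wt .
  qed
  have part2: "is_ranking_distribution m (p_star m)" by (rule pstar_dist[OF m0])
  have part3: "condorcet_prob m n (p_star m) = real m * (1 - binom_cdf ?k n (1 / real m))"
  proof -
    let ?p = "p_star m"
    let ?C = "cyclic_ranking m ` {0..<m}"
    have p1: "(\<Sum>r\<in>rankings m. ?p r) = 1" using part2 unfolding is_ranking_distribution_def by auto
    have "condorcet_prob m n ?p = (\<Sum>f\<in>profiles m n. if (\<exists>c. condorcet_winner m n f c) then wt n ?p f else 0)"
      unfolding cp_wt by (rule sum.inter_filter[OF finP])
    also have "\<dots> = (\<Sum>f\<in>profiles m n. if (\<exists>c<m. maj n f c) then wt n ?p f else 0)"
    proof (rule sum.cong[OF refl])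
      fix f assume fP: "f \<in> profiles m n"
      show "(if (\<exists>c. condorcet_winner m n f c) then wt n ?p f else 0) =
            (if (\<exists>c<m. maj n f c) then wt n ?p f else 0)"
      proof (cases "wt n ?p f = 0")
        case True
        then show ?thesis by simp
      next
        case False
        have inC: "f i \<in> ?C" if "i < n" for i
        proof (rule ccontr)
          assume "f i \<notin> ?C"
          then have "?p (f i) = 0" unfolding p_star_def by simp
          then have "wt n ?p f = 0" unfolding wt_def using that by (intro prod_zero) auto
          then show False using False by simp
        qed
        have "(\<exists>c. condorcet_winner m n f c) = (\<exists>c<m. maj n f c)"
        proof
          assume "\<exists>c. condorcet_winner m n f c"
          then obtain c where c: "condorcet_winner m n f c" by blast
          then have "c < m" unfolding condorcet_winner_def by simp
          then show "\<exists>c<m. maj n f c" using cw_cyc_maj[OF m2 inC c] by blast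
        next
          assume "\<exists>c<m. maj n f c"
          then show "\<exists>c. condorcet_winner m n f c" using maj_cw[OF m0 fP] by blast
        qed
        then show ?thesis by simp
      qed
    qed
    also have "\<dots> = (\<Sum>f\<in>{f\<in>profiles m n. \<exists>c<m. maj n f c}. wt n ?p f)"
      by (rule sum.inter_filter[OF finP, symmetric])
    also have "\<dots> = (\<Sum>c<m. gfun n ?k (qf m ?p c))"
      by (rule maj_sum[OF p1])
    also have "\<dots> = (\<Sum>c<m. gfun n ?k (1 / real m))"
      by (intro sum.cong refl) (simp add: qf_pstar)
    also have "\<dots> = real m * gfun n ?k (1 / real m)" by simp
    finally show ?thesis unfolding rhs .
  qed
  show ?thesis using part1 part2 part3 by blast
qed

end
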